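(* Let $d\in\mathbb{N}$, $\alpha\in[0,1)$, $\delta>0$, $\lambda>0$, $\eta\in\mathbb{R}^{d}$, and let $\rho\in\mathbb{R}^{d\times d}$ be a symmetric positive definite matrix. For $x,y\in\mathbb{R}^d$ put $\langle x,y\rangle_\rho=x^{\top}\rho^{-1}y$ and $\|x\|_\rho=\sqrt{\langle x,x\rangle_\rho}$, and set $c_1=\sqrt{\|\eta\|_\rho^{2}+2\lambda}$. Consider the (Normal Tempered Stable) L\'evy density on $\mathbb{R}^d_*=\mathbb{R}^d\setminus\{0\}$ \[ \ell(z)=2\delta\sqrt{\frac{c_1^{\,2\alpha+d}}{(2\pi)^{d}\det[\rho]}}\;\frac{K_{\alpha+\frac{d}{2}}\!\left(c_1\|z\|_\rho\right)}{\|z\|_\rho^{\alpha+\frac{d}{2}}}\;e^{\langle\eta,z\rangle_\rho},\qquad z\in\mathbb{R}^d_*, \] where $K_\nu(\tau)=\frac12\int_0^\infty y^{\nu-1}e^{-\frac12\tau(y+y^{-1})}\,dy$ ($\tau>0$) is the modified Bessel function of the second kind. Define \[ A_\ell=2\alpha,\qquad B_\ell=\sqrt{\|\eta\|_\rho^{2}+2\lambda}-\|\eta\|_\rho,\qquad C_\ell(h)=\frac{2^{\alpha}\delta\,\Gamma\!\left(\alpha+\frac d2\right)}{\sqrt{\pi^{d}\det[\rho]}}\,e^{h\|\eta\|_\rho}\quad(h>0). \] Then for every $h>0$ and every $z\in\mathbb{R}^d_*$ with $\|z\|_\rho\in(0,h]$ one has $\ell(z)\le C_\ell(h)\,\|z\|_\rho^{-A_\ell-d}$,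 and $\ell(z)=O\!\left(e^{-B_\ell\|z\|_\rho}\right)$ as $\|z\|_\rho\to\infty$.
   Context: The density $\ell$ is the L\'evy measure of the $d$-dimensional Normal Tempered Stable process $L(t)=B(G(t))-\mathbb{E}[B(G(t))]$, where $B(t)=\eta t+\sqrt{\rho}\,W(t)$ with $W$ a standard $d$-dimensional Wiener process and $G$ an independent tempered stable subordinator with L\'evy density $\mathbb{I}_{x>0}\,\delta e^{-\lambda x}x^{-1-\alpha}$. $\Gamma$ denotes the Gamma function. *)

theory Defs
  imports "HOL-Analysis.Analysis"
begin

definition inner_rho :: "real^'n^'n \<Rightarrow> real^'n \<Rightarrow> real^'n \<Rightarrow> real" where
  "inner_rho rho x y = x \<bullet> (matrix_inv rho *v y)"

definition norm_rho :: "real^'n^'n \<Rightarrow> real^'n \<Rightarrow> real" where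
  "norm_rho rho x = sqrt (inner_rho rho x x)"

definition besselK :: "real \<Rightarrow> real \<Rightarrow> real" where
  "besselK nu tau = 1/2 * integral {0<..} (\<lambda>y. y powr (nu - 1) * exp (- tau / 2 * (y + 1 / y)))"

definition sym_pos_def :: "real^'n^'n \<Rightarrow> bool" where
  "sym_pos_def rho \<longleftrightarrow> transpose rho = rho \<and> (\<forall>x. x \<noteq> 0 \<longrightarrow> x \<bullet> (rho *v x) > 0)"

definition nts_density ::
  "real \<Rightarrow> real \<Rightarrow> real \<Rightarrow> real^'n \<Rightarrow> real^'n^'n \<Rightarrow> real^'n \<Rightarrow> real" where
  "nts_density \<alpha> \<delta> lam \<eta> rho z =
     (let d = real CARD('n); c1 = sqrt ((norm_rho rho \<eta>)\<^sup>2 + 2 * lam) in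
      2 * \<delta> * sqrt (c1 powr (2 * \<alpha> + d) / ((2 * pi) ^ CARD('n) * det rho))
        * besselK (\<alpha> + d / 2) (c1 * norm_rho rho z) / norm_rho rho z powr (\<alpha> + d / 2)
        * exp (inner_rho rho \<eta> z))"

end

theory Submission imports Defs begin

lemma gamma_scaled:
  fixes \<nu> s :: real
  assumes nu: "\<nu> > 0" and s: "s > 0"
  shows "((\<lambda>y. y powr (\<nu>-1) * exp (-(s*y))) has_integral Gamma \<nu> / s powr \<nu>) {0<..}"
proof -
  define F where "F x = (if 0 < x then x powr (\<nu>-1) / exp x else 0)" for x::real
  have eqF: "(\<lambda>x. if x \<in> {0..} then x powr (\<nu>-1) / exp x else 0) = F"
  proof (rule ext)
    fix x :: real
    show "(if x \<in> {0..} then x powr (\<nu>-1) / exp x else 0) = F x"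
      by (cases "x = 0") (auto simp: F_def)
  qed
  have "((\<lambda>x. if x \<in> {0..} then x powr (\<nu>-1) / exp x else 0) has_integral Gamma \<nu>) UNIV"
    using Gamma_integral_real[OF nu] by (simp only: has_integral_restrict_UNIV)
  then have 1: "(F has_integral Gamma \<nu>) UNIV" by (simp only: eqF)
  have Fnn: "0 \<le> F x" for x by (simp add: F_def)
  have "F absolutely_integrable_on UNIV"
    using 1 Fnn by (intro nonnegative_absolutely_integrable_1) auto
  then have int: "integrable lebesgue F"
    by (simp add: absolutely_integrable_on_def set_integrable_def)
  have "integral\<^sup>L lebesgue F = Gamma \<nu>"
    using has_integral_integral_lebesgue[OF int] 1 has_integral_unique by blast
  then have "has_bochner_integral lebesgue F (Gamma \<nu>)"
    using int by (simp add: has_bochner_integral_iff)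
  then have "has_bochner_integral lebesgue (\<lambda>x. F (0 + s * x)) (Gamma \<nu> /\<^sub>R \<bar>s\<bar>)"
    using has_bochner_integral_lebesgue_real_affine_iff[of s F "Gamma \<nu>" 0] s by auto
  then have I1: "((\<lambda>x. F (s * x)) has_integral Gamma \<nu> / s) UNIV"
    using s by (auto simp: has_bochner_integral_iff divide_inverse mult.commute intro!: has_integral_integral_lebesgue[THEN has_integral_eq_rhs])
  have EQ: "(\<lambda>x. F (s * x)) = (\<lambda>x. if x \<in> {0<..} then s powr (\<nu>-1) * (x powr (\<nu>-1) * exp (-(s*x))) else 0)"
  proof (rule ext)
    fix x :: real
    show "F (s * x) = (if x \<in> {0<..} then s powr (\<nu>-1) * (x powr (\<nu>-1) * exp (-(s*x))) else 0)"
    proof (cases "x > 0")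
      case True
      then have "F (s * x) = (s * x) powr (\<nu>-1) / exp (s * x)" using s by (simp add: F_def)
      also have "\<dots> = s powr (\<nu>-1) * (x powr (\<nu>-1) * exp (-(s*x)))"
        using s True by (simp add: powr_mult exp_minus divide_inverse)
      finally show ?thesis using True by simp
    next
      case False
      then have "\<not> s * x > 0" using s by (simp add: zero_less_mult_iff)
      then show ?thesis using False by (simp add: F_def)
    qed
  qed
  have "((\<lambda>x. if x \<in> {0<..} then s powr (\<nu>-1) * (x powr (\<nu>-1) * exp (-(s*x))) else 0) has_integral Gamma \<nu> / s) UNIV"
    using I1 unfolding EQ .
  then have "((\<lambda>x. s powr (\<nu>-1) * (x powr (\<nu>-1) * exp (-(s*x)))) has_integral Gamma \<nu> / s) {0<..}"
    by (simp only: has_integral_restrict_UNIV)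
  then have H: "((\<lambda>x. (1 / s powr (\<nu>-1)) * (s powr (\<nu>-1) * (x powr (\<nu>-1) * exp (-(s*x))))) has_integral (1 / s powr (\<nu>-1)) * (Gamma \<nu> / s)) {0<..}"
    by (rule has_integral_mult_right)
  moreover have E2: "(1 / s powr (\<nu>-1)) * (Gamma \<nu> / s) = Gamma \<nu> / s powr \<nu>"
    using s by (simp add: powr_diff field_simps)
  have E3: "(\<lambda>x. (1 / s powr (\<nu>-1)) * (s powr (\<nu>-1) * (x powr (\<nu>-1) * exp (-(s*x))))) = (\<lambda>y. y powr (\<nu>-1) * exp (-(s*y)))"
    using s by (simp add: fun_eq_iff)
  show ?thesis using H unfolding E2 E3 .
qed

lemma cmp_int:
  fixes f g :: "real \<Rightarrow> real"
  assumes g: "(g has_integral I) S" and fg: "\<And>x. x \<in> S \<Longrightarrow> 0 \<le> f x \<and> f x \<le> g x"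
  shows "integral S f \<le> I"
proof (cases "f integrable_on S")
  case True
  then have "integral S f \<le> integral S g"
    using g fg by (intro integral_le) auto
  then show ?thesis using g by (simp add: integral_unique)
next
  case False
  then have "integral S f = 0" by (simp add: not_integrable_integral)
  moreover have "0 \<le> I" using g fg by (meson has_integral_nonneg order_trans)
  ultimately show ?thesis by simp
qed

lemma besselK_nonneg: "0 \<le> besselK \<nu> \<tau>"
proof (cases "(\<lambda>y. y powr (\<nu> - 1) * exp (- \<tau> / 2 * (y + 1 / y))) integrable_on {0<..}")
  case True
  then show ?thesis unfolding besselK_def by (auto intro!: integral_nonneg)
next
  case False
  then show ?thesis unfolding besselK_def by (simp add: not_integrable_integral)
qed

lemma pt1:
  fixes y \<tau> :: real assumes "y > 0" "\<tau> \<ge> 1"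
  shows "- \<tau> / 2 * (y + 1 / y) \<le> 1 - \<tau> + -((1/2) * y)"
proof -
  have "(\<tau>-1)*(y-1)^2 \<ge> 0" using assms by simp
  then have "-\<tau> * (y*y + 1) \<le> 2*y*(1 - \<tau>) - y*y"
    by (simp add: power2_eq_square algebra_simps)
  then show ?thesis using assms by (simp add: field_simps)
qed


lemma besselK_le1:
  assumes nu: "\<nu> > 0" and t: "\<tau> > 0"
  shows "besselK \<nu> \<tau> \<le> 1/2 * (Gamma \<nu> / (\<tau>/2) powr \<nu>)"
proof -
  have "integral {0<..} (\<lambda>y. y powr (\<nu> - 1) * exp (- \<tau> / 2 * (y + 1 / y))) \<le> Gamma \<nu> / (\<tau>/2) powr \<nu>"
  proof (rule cmp_int[OF gamma_scaled[OF nu, of "\<tau>/2"]])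
    fix y :: real assume "y \<in> {0<..}"
    then have y: "y > 0" by simp
    have "exp (- \<tau> / 2 * (y + 1 / y)) \<le> exp (- (\<tau> / 2 * y))"
      using y t by (simp add: field_simps)
    then show "0 \<le> y powr (\<nu> - 1) * exp (- \<tau> / 2 * (y + 1 / y)) \<and>
       y powr (\<nu> - 1) * exp (- \<tau> / 2 * (y + 1 / y)) \<le> y powr (\<nu> - 1) * exp (- (\<tau> / 2 * y))"
      by (auto intro!: mult_left_mono)
  qed (use t in auto)
  then show ?thesis unfolding besselK_def by simp
qed

lemma besselK_le2:
  assumes nu: "\<nu> > 0" and t: "\<tau> \<ge> 1"
  shows "besselK \<nu> \<tau> \<le> 1/2 * (exp (1 - \<tau>) * (Gamma \<nu> / (1/2) powr \<nu>))"
proof -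
  have "integral {0<..} (\<lambda>y. y powr (\<nu> - 1) * exp (- \<tau> / 2 * (y + 1 / y))) \<le> exp (1 - \<tau>) * (Gamma \<nu> / (1/2) powr \<nu>)"
  proof (rule cmp_int[OF has_integral_mult_right[OF gamma_scaled[OF nu, of "1/2"]]])
    fix y :: real assume "y \<in> {0<..}"
    then have y: "y > 0" by simp
    have "exp (- \<tau> / 2 * (y + 1 / y)) \<le> exp (1 - \<tau> + - ((1/2) * y))"
      using pt1[OF y t] by simp
    also have "\<dots> = exp (1 - \<tau>) * exp (- ((1/2) * y))" by (simp flip: exp_add)
    finally have "y powr (\<nu> - 1) * exp (- \<tau> / 2 * (y + 1 / y)) \<le> y powr (\<nu> - 1) * (exp (1 - \<tau>) * exp (- ((1/2) * y)))"
      by (auto intro!: mult_left_mono)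
    then show "0 \<le> y powr (\<nu> - 1) * exp (- \<tau> / 2 * (y + 1 / y)) \<and>
       y powr (\<nu> - 1) * exp (- \<tau> / 2 * (y + 1 / y)) \<le> exp (1 - \<tau>) * (y powr (\<nu> - 1) * exp (- (1/2 * y)))"
      by (simp add: algebra_simps)
  qed auto
  then show ?thesis unfolding besselK_def by simp
qed

lemma sym_dot:
  fixes Q :: "real^'n^'n"
  assumes "transpose Q = Q"
  shows "x \<bullet> (Q *v y) = y \<bullet> (Q *v x)"
proof -
  have "x \<bullet> (Q *v y) = (x v* Q) \<bullet> y" by (simp add: dot_lmul_matrix)
  also have "x v* Q = transpose Q *v x" by simp
  finally show ?thesis using assms by (simp add: inner_commute)
qed

lemma cs_mat:
  fixes Q :: "real^'n^'n"
  assumes sym: "transpose Q = Q" and pd: "\<And>x. x \<noteq> 0 \<Longrightarrow> x \<bullet> (Q *v x) > 0"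
  shows "u \<bullet> (Q *v v) \<le> sqrt (u \<bullet> (Q *v u)) * sqrt (v \<bullet> (Q *v v))"
proof -
  define a where "a = u \<bullet> (Q *v u)"
  define b where "b = u \<bullet> (Q *v v)"
  define c where "c = v \<bullet> (Q *v v)"
  have psd: "0 \<le> x \<bullet> (Q *v x)" for x using pd[of x] by (cases "x = 0") auto
  have quad: "0 \<le> a + 2 * t * b + t^2 * c" for t
  proof -
    have "0 \<le> (u + t *\<^sub>R v) \<bullet> (Q *v (u + t *\<^sub>R v))" by (rule psd)
    also have "\<dots> = a + t * (u \<bullet> (Q *v v)) + t * (v \<bullet> (Q *v u)) + t^2 * c"
      by (simp add: a_def c_def algebra_simps inner_add_left inner_add_right power2_eq_square)
    also have "v \<bullet> (Q *v u) = b" using sym_dot[OF sym] b_def by metis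
    finally show ?thesis by (simp add: b_def)
  qed
  have a0: "0 \<le> a" "0 \<le> c" using psd by (auto simp: a_def c_def)
  have "b^2 \<le> a * c"
  proof (cases "c = 0")
    case True
    then have "v = 0" using pd[of v] c_def by force
    then show ?thesis using a0 by (simp add: b_def)
  next
    case False
    then have c: "c > 0" using a0 by simp
    have "0 \<le> a + 2 * (-b/c) * b + (-b/c)^2 * c" by (rule quad)
    then have "0 \<le> a - b^2 / c" using c by (simp add: power2_eq_square field_simps)
    then show ?thesis using c by (simp add: field_simps)
  qed
  then have "sqrt (b^2) \<le> sqrt (a * c)" by (rule real_sqrt_le_mono)
  then have "\<bar>b\<bar> \<le> sqrt a * sqrt c" by (simp add: real_sqrt_mult)
  then show ?thesis by (simp add: a_def b_def c_def)
qed

lemma det_pos: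
  fixes Q :: "real^'n^'n"
  assumes pd: "\<And>x. x \<noteq> 0 \<Longrightarrow> x \<bullet> (Q *v x) > 0"
  shows "det Q > 0"
proof (rule ccontr)
  assume "\<not> det Q > 0"
  define M where "M t = (1 - t) *\<^sub>R mat 1 + t *\<^sub>R Q" for t :: real
  have cont: "continuous_on {0..1} (\<lambda>t. det (M t))"
    unfolding det_def M_def by (simp add: mat_def) (intro continuous_intros)
  have "M 1 = Q" "M 0 = mat 1" by (auto simp: M_def)
  then obtain t where t: "0 \<le> t" "t \<le> 1" "det (M t) = 0"
    using IVT2'[of "\<lambda>t. det (M t)" 1 0 0, OF _ _ _ cont] \<open>\<not> det Q > 0\<close> by auto
  then have "\<not> invertible (M t)" by (simp add: invertible_det_nz)
  then obtain x where x: "x \<noteq> 0" "M t *v x = 0"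
    unfolding invertible_left_inverse matrix_left_invertible_ker by blast
  have "x \<bullet> (M t *v x) = (1 - t) * (x \<bullet> x) + t * (x \<bullet> (Q *v x))"
    by (simp add: M_def algebra_simps matrix_vector_mult_add_rdistrib flip: scaleR_matrix_vector_assoc)
  moreover have "(1 - t) * (x \<bullet> x) + t * (x \<bullet> (Q *v x)) > 0"
  proof (cases "t = 0")
    case True then show ?thesis using x by simp
  next
    case False
    then have "t * (x \<bullet> (Q *v x)) > 0" using pd[OF x(1)] t by simp
    moreover have "(1 - t) * (x \<bullet> x) \<ge> 0" using t by simp
    ultimately show ?thesis by linarith
  qed
  ultimately show False using x by simp
qed


lemma alg:
  fixes a b p q S E \<delta> G :: real
  assumes "a > 0" "b > 0" "p > 0" "q > 0" "S > 0"
  shows "2 * \<delta> * (a / (q * S)) * (1/2 * (G / (a * b / (p * q)))) * (E / b)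
       = p * \<delta> * G / S * E * (1 / (b * b))"
  using assms by (simp add: field_simps)

theorem mainTheorem1:
  fixes \<alpha> \<delta> lam :: real and \<eta> :: "real^'n" and rho :: "real^'n^'n"
  assumes "0 \<le> \<alpha>" "\<alpha> < 1" "\<delta> > 0" "lam > 0" "sym_pos_def rho"
  shows "(\<forall>h>0. \<forall>z::real^'n. z \<noteq> 0 \<and> norm_rho rho z \<le> h \<longrightarrow>
            nts_density \<alpha> \<delta> lam \<eta> rho z
              \<le> 2 powr \<alpha> * \<delta> * Gamma (\<alpha> + real CARD('n) / 2)
                  / sqrt (pi ^ CARD('n) * det rho) * exp (h * norm_rho rho \<eta>)
                * norm_rho rho z powr (- (2 * \<alpha>) - real CARD('n)))
       \<and> (\<exists>M R. \<forall>z::real^'n. z \<noteq> 0 \<and> R \<le> norm_rho rho z \<longrightarrow>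
            \<bar>nts_density \<alpha> \<delta> lam \<eta> rho z\<bar>
              \<le> M * exp (- (sqrt ((norm_rho rho \<eta>)\<^sup>2 + 2 * lam) - norm_rho rho \<eta>) * norm_rho rho z))"
proof -
  note a0 = assms(1) and dl = assms(3) and lam = assms(4)
  have sym: "transpose rho = rho" and pd: "\<And>x. x \<noteq> 0 \<Longrightarrow> x \<bullet> (rho *v x) > 0"
    using assms(5) unfolding sym_pos_def_def by auto
  have dpos: "det rho > 0" using det_pos pd by blast
  have inv: "invertible rho" using dpos by (simp add: invertible_det_nz)
  define P where "P = matrix_inv rho"
  have "rho ** P = mat 1 \<and> P ** rho = mat 1"
    using inv unfolding invertible_def P_def matrix_inv_def by (rule someI_ex)
  then have RP: "rho ** P = mat 1" and PR: "P ** rho = mat 1" by auto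
  have bk: "rho *v (P *v x) = x" for x by (simp add: matrix_vector_mul_assoc RP)
  have Pnz: "x \<noteq> 0 \<Longrightarrow> P *v x \<noteq> 0" for x using bk[of x] by auto
  have ip: "inner_rho rho x y = (P *v x) \<bullet> (rho *v (P *v y))" for x y
  proof -
    have "inner_rho rho x y = (rho *v (P *v x)) \<bullet> (P *v y)"
      unfolding inner_rho_def P_def[symmetric] bk ..
    also have "\<dots> = (P *v y) \<bullet> (rho *v (P *v x))" by (simp add: inner_commute)
    also have "\<dots> = (P *v x) \<bullet> (rho *v (P *v y))" using sym_dot[OF sym] by metis
    finally show ?thesis .
  qed
  have nr: "norm_rho rho x = sqrt ((P *v x) \<bullet> (rho *v (P *v x)))" for x
    unfolding norm_rho_def ip ..
  have nr_nn: "0 \<le> norm_rho rho x" for x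
    unfolding nr using pd[of "P *v x"] by (cases "P *v x = 0") auto
  have nr_pos: "x \<noteq> 0 \<Longrightarrow> 0 < norm_rho rho x" for x
    unfolding nr using pd[OF Pnz] by simp
  have CS: "inner_rho rho x y \<le> norm_rho rho x * norm_rho rho y" for x y
    unfolding ip nr by (rule cs_mat[OF sym pd])
  define d where "d = real CARD('n)"
  have d1: "d \<ge> 1" unfolding d_def by simp
  define \<nu> where "\<nu> = \<alpha> + d / 2"
  have nu: "\<nu> > 0" using a0 d1 by (simp add: \<nu>_def)
  define n\<eta> where "n\<eta> = norm_rho rho \<eta>"
  have ne0: "0 \<le> n\<eta>" by (simp add: n\<eta>_def nr_nn)
  define c1 where "c1 = sqrt (n\<eta>\<^sup>2 + 2 * lam)"
  have c1: "c1 > 0" using lam ne0 by (simp add: c1_def add_nonneg_pos)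
  define A where "A = 2 * \<delta> * sqrt (c1 powr (2 * \<alpha> + d) / ((2 * pi) ^ CARD('n) * det rho))"
  have A0: "0 \<le> A" using dl dpos by (simp add: A_def)
  have ell: "nts_density \<alpha> \<delta> lam \<eta> rho z
      = A * besselK \<nu> (c1 * norm_rho rho z) * (exp (inner_rho rho \<eta> z) / norm_rho rho z powr \<nu>)" for z
    unfolding nts_density_def Let_def A_def c1_def n\<eta>_def \<nu>_def d_def by simp
  define S where "S = sqrt (pi ^ CARD('n) * det rho)"
  have S0: "S > 0" using dpos by (simp add: S_def)
  have sqA: "sqrt (c1 powr (2 * \<alpha> + d) / ((2 * pi) ^ CARD('n) * det rho)) = c1 powr \<nu> / (2 powr (d/2) * S)"
  proof -
    have e1: "c1 powr (2 * \<alpha> + d) = (c1 powr \<nu>)^2"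
      by (simp add: \<nu>_def power2_eq_square flip: powr_add)
    have e2: "(2 * pi) ^ CARD('n) * det rho = (2 powr (d/2))^2 * (pi ^ CARD('n) * det rho)"
      by (simp add: d_def power2_eq_square power_mult_distrib powr_realpow flip: powr_add)
    show ?thesis unfolding e1 e2 S_def
      by (simp add: real_sqrt_divide real_sqrt_mult)
  qed
  have part1: "nts_density \<alpha> \<delta> lam \<eta> rho z
              \<le> 2 powr \<alpha> * \<delta> * Gamma (\<alpha> + real CARD('n) / 2)
                  / sqrt (pi ^ CARD('n) * det rho) * exp (h * norm_rho rho \<eta>)
                * norm_rho rho z powr (- (2 * \<alpha>) - real CARD('n))"
    if h: "h > 0" and z: "z \<noteq> 0" and zh: "norm_rho rho z \<le> h" for h z
  proof -
    define r where "r = norm_rho rho z"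
    have r: "r > 0" using nr_pos[OF z] by (simp add: r_def)
    have K: "besselK \<nu> (c1 * r) \<le> 1/2 * (Gamma \<nu> / (c1 * r / 2) powr \<nu>)"
      using besselK_le1[OF nu] c1 r by simp
    have E: "exp (inner_rho rho \<eta> z) \<le> exp (h * n\<eta>)"
    proof -
      have "inner_rho rho \<eta> z \<le> n\<eta> * r" using CS[of \<eta> z] by (simp add: n\<eta>_def r_def)
      also have "\<dots> \<le> h * n\<eta>" using mult_left_mono[OF zh ne0] by (simp add: r_def mult.commute)
      finally show ?thesis by simp
    qed
    have "nts_density \<alpha> \<delta> lam \<eta> rho z = A * besselK \<nu> (c1 * r) * (exp (inner_rho rho \<eta> z) / r powr \<nu>)"
      by (simp add: ell r_def)
    also have "\<dots> \<le> A * (1/2 * (Gamma \<nu> / (c1 * r / 2) powr \<nu>)) * (exp (h * n\<eta>) / r powr \<nu>)"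
      using K E A0 r besselK_nonneg Gamma_real_pos[OF nu] c1
      by (intro mult_mono divide_right_mono) auto
    also have "\<dots> = 2 powr \<alpha> * \<delta> * Gamma \<nu> / S * exp (h * n\<eta>) * r powr (- (2 * \<alpha>) - d)"
    proof -
      have p1: "(c1 * r / 2) powr \<nu> = c1 powr \<nu> * r powr \<nu> / 2 powr \<nu>"
        using c1 r powr_divide[of "c1 * r" 2 \<nu>] powr_mult[of c1 r \<nu>] by simp
      have p2c: "\<nu> + \<nu> = 2 * \<alpha> + d" by (simp add: \<nu>_def)
      have p2a: "r powr \<nu> * r powr \<nu> = r powr (2 * \<alpha> + d)"
        unfolding p2c[symmetric] by (rule powr_add[symmetric])
      have p2b: "- (2 * \<alpha>) - d = - (2 * \<alpha> + d)" by simp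
      have p2: "r powr (- (2 * \<alpha>) - d) = 1 / (r powr \<nu> * r powr \<nu>)"
        unfolding p2a p2b by (rule powr_minus_divide)
      have p3: "2 powr \<nu> = 2 powr \<alpha> * 2 powr (d/2)"
        unfolding \<nu>_def by (rule powr_add)
      show ?thesis unfolding A_def sqA p1 p2 p3
        by (rule alg) (use c1 r S0 in auto)
    qed
    finally show ?thesis by (simp add: S_def n\<eta>_def r_def \<nu>_def d_def)
  qed
  define G2 where "G2 = Gamma \<nu> / (1/2) powr \<nu>"
  have G2: "0 \<le> G2" using nu by (simp add: G2_def Gamma_real_pos less_imp_le)
  define M where "M = A * (1/2 * (exp 1 * G2))"
  define R where "R = max 1 (1 / c1)"
  have part2: "\<bar>nts_density \<alpha> \<delta> lam \<eta> rho z\<bar>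
              \<le> M * exp (- (sqrt ((norm_rho rho \<eta>)\<^sup>2 + 2 * lam) - norm_rho rho \<eta>) * norm_rho rho z)"
    if z: "z \<noteq> 0" and zR: "R \<le> norm_rho rho z" for z
  proof -
    define r where "r = norm_rho rho z"
    have r1: "r \<ge> 1" using zR by (simp add: R_def r_def)
    have "1 / c1 \<le> r" using zR by (simp add: R_def r_def)
    then have cr: "c1 * r \<ge> 1" using c1 by (simp add: pos_divide_le_eq mult.commute)
    have K: "besselK \<nu> (c1 * r) \<le> 1/2 * (exp (1 - c1 * r) * G2)"
      using besselK_le2[OF nu cr] by (simp add: G2_def)
    have rp: "r powr \<nu> \<ge> 1" by (rule ge_one_powr_ge_zero) (use r1 nu in auto)
    have E: "exp (inner_rho rho \<eta> z) / r powr \<nu> \<le> exp (n\<eta> * r)"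
    proof -
      have "exp (inner_rho rho \<eta> z) / r powr \<nu> \<le> exp (inner_rho rho \<eta> z) / 1"
        by (rule divide_left_mono) (use rp in auto)
      then have "exp (inner_rho rho \<eta> z) / r powr \<nu> \<le> exp (inner_rho rho \<eta> z)"
        by simp
      also have "inner_rho rho \<eta> z \<le> n\<eta> * r" using CS[of \<eta> z] by (simp add: n\<eta>_def r_def)
      finally show ?thesis by simp
    qed
    have nn: "0 \<le> nts_density \<alpha> \<delta> lam \<eta> rho z"
      unfolding ell using A0 besselK_nonneg by (intro mult_nonneg_nonneg divide_nonneg_nonneg) auto
    have "\<bar>nts_density \<alpha> \<delta> lam \<eta> rho z\<bar> = nts_density \<alpha> \<delta> lam \<eta> rho z"
      using nn by (rule abs_of_nonneg)
    also have "\<dots> = A * besselK \<nu> (c1 * r) * (exp (inner_rho rho \<eta> z) / r powr \<nu>)"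
      by (simp only: ell r_def)
    also have "\<dots> \<le> A * (1/2 * (exp (1 - c1 * r) * G2)) * exp (n\<eta> * r)"
      using K E A0 G2 besselK_nonneg by (intro mult_mono) auto
    also have "\<dots> = M * exp (- (c1 - n\<eta>) * r)"
    proof -
      have ee: "exp (1 - c1 * r) * exp (n\<eta> * r) = exp 1 * exp (- (c1 - n\<eta>) * r)"
        by (simp add: algebra_simps flip: exp_add)
      show ?thesis unfolding M_def
        by (metis (no_types, lifting) ee mult.assoc mult.left_commute)
    qed
    finally show ?thesis by (simp only: c1_def n\<eta>_def r_def)
  qed
  have P1: "\<forall>h>0. \<forall>z::real^'n. z \<noteq> 0 \<and> norm_rho rho z \<le> h \<longrightarrow>
            nts_density \<alpha> \<delta> lam \<eta> rho z
              \<le> 2 powr \<alpha> * \<delta> * Gamma (\<alpha> + real CARD('n) / 2)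
                  / sqrt (pi ^ CARD('n) * det rho) * exp (h * norm_rho rho \<eta>)
                * norm_rho rho z powr (- (2 * \<alpha>) - real CARD('n))"
  proof (intro allI impI)
    fix h :: real and z :: "real^'n"
    assume h: "h > 0" and hz: "z \<noteq> 0 \<and> norm_rho rho z \<le> h"
    show "nts_density \<alpha> \<delta> lam \<eta> rho z
              \<le> 2 powr \<alpha> * \<delta> * Gamma (\<alpha> + real CARD('n) / 2)
                  / sqrt (pi ^ CARD('n) * det rho) * exp (h * norm_rho rho \<eta>)
                * norm_rho rho z powr (- (2 * \<alpha>) - real CARD('n))"
      by (rule part1[OF h conjunct1[OF hz] conjunct2[OF hz]])
  qed
  have P2: "\<forall>z::real^'n. z \<noteq> 0 \<and> R \<le> norm_rho rho z \<longrightarrow>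
            \<bar>nts_density \<alpha> \<delta> lam \<eta> rho z\<bar>
              \<le> M * exp (- (sqrt ((norm_rho rho \<eta>)\<^sup>2 + 2 * lam) - norm_rho rho \<eta>) * norm_rho rho z)"
    using part2 by blast
  show ?thesis
    using P1 P2 by (intro conjI exI) assumption+
qed

end
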